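(* Let $W$ be a binary MAC with 2 users, let $X[1],X[2]$ be i.i.d. uniform on $\mathbb{F}_2$ and let $Y$ be the output of $W$ on input $(X[1],X[2])$. Consider the triples $$I=\big(I(X[1];Y,X[2]),\,I(X[2];Y,X[1]),\,I(X[1],X[2];Y)\big),\qquad J=\big(I(X[1];Y),\,I(X[2];Y),\,I(X[1]+X[2];Y)\big).$$ If all entries of $I$ are integers, then all entries of $J$ lie in $\{0,1\}$ and $J$ is uniquely determined by $I$ (any two such MACs with the same integer triple $I$ have the same $J$). Conversely, if all entries of $J$ lie in $\{0,1\}$, then all entries of $I$ are integers and $I$ is uniquely determined by $J$.
   Context: A binary MAC with 2 users is a channel $W$ with input alphabet $\mathbb{F}_2^2$ and finite output alphabet. Mutual information is in bits; $X[1]+X[2]$ is addition in $\mathbb{F}_2$. *)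

theory Defs
  imports Complex_Main
begin

text \<open>A binary MAC with 2 users: input alphabet F_2^2 (F_2 modelled by bool, with
addition in F_2 being exclusive or, i.e. a + b = (a \<noteq> b)), finite output alphabet 'y.
W x1 x2 y is the transition probability W(y | x1, x2).\<close>

definition is_binary_mac :: "(bool \<Rightarrow> bool \<Rightarrow> 'y::finite \<Rightarrow> real) \<Rightarrow> bool" where
  "is_binary_mac W \<longleftrightarrow> (\<forall>a b y. 0 \<le> W a b y) \<and> (\<forall>a b. (\<Sum>y\<in>UNIV. W a b y) = 1)"

definition mac_joint :: "(bool \<Rightarrow> bool \<Rightarrow> 'y::finite \<Rightarrow> real) \<Rightarrow> bool \<times> bool \<times> 'y \<Rightarrow> real" where
  "mac_joint W z = W (fst z) (fst (snd z)) (snd (snd z)) / 4"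

definition mutual_info :: "('z::finite \<Rightarrow> real) \<Rightarrow> ('z \<Rightarrow> 'a) \<Rightarrow> ('z \<Rightarrow> 'b) \<Rightarrow> real" where
  "mutual_info P f g =
     (\<Sum>a\<in>f ` UNIV. \<Sum>b\<in>g ` UNIV.
        (let pab = (\<Sum>z | f z = a \<and> g z = b. P z);
             pa = (\<Sum>z | f z = a. P z);
             pb = (\<Sum>z | g z = b. P z)
         in if pab > 0 then pab * log 2 (pab / (pa * pb)) else 0))"

definition X1 :: "bool \<times> bool \<times> 'y \<Rightarrow> bool" where "X1 z = fst z"
definition X2 :: "bool \<times> bool \<times> 'y \<Rightarrow> bool" where "X2 z = fst (snd z)"
definition Yout :: "bool \<times> bool \<times> 'y \<Rightarrow> 'y" where "Yout z = snd (snd z)"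

definition I_triple :: "(bool \<Rightarrow> bool \<Rightarrow> 'y::finite \<Rightarrow> real) \<Rightarrow> real \<times> real \<times> real" where
  "I_triple W =
    (mutual_info (mac_joint W) X1 (\<lambda>z. (Yout z, X2 z)),
     mutual_info (mac_joint W) X2 (\<lambda>z. (Yout z, X1 z)),
     mutual_info (mac_joint W) (\<lambda>z. (X1 z, X2 z)) Yout)"

definition J_triple :: "(bool \<Rightarrow> bool \<Rightarrow> 'y::finite \<Rightarrow> real) \<Rightarrow> real \<times> real \<times> real" where
  "J_triple W =
    (mutual_info (mac_joint W) X1 Yout,
     mutual_info (mac_joint W) X2 Yout,
     mutual_info (mac_joint W) (\<lambda>z. X1 z \<noteq> X2 z) Yout)"

definition triple_in :: "real set \<Rightarrow> real \<times> real \<times> real \<Rightarrow> bool" where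
  "triple_in S t \<longleftrightarrow> fst t \<in> S \<and> fst (snd t) \<in> S \<and> snd (snd t) \<in> S"

end

theory Submission
  imports Defs
begin


definition phi :: "real \<Rightarrow> real" where "phi x = x * log 2 x"
definition H2 :: "real \<Rightarrow> real \<Rightarrow> real" where "H2 s t = phi (s+t) - phi s - phi t"

lemma phi0[simp]: "phi 0 = 0" by (simp add: phi_def)

lemma H2_0l[simp]: "H2 0 t = 0" by (simp add: H2_def)
lemma H2_0r[simp]: "H2 s 0 = 0" by (simp add: H2_def)

lemma H2_pos_form:
  assumes "s > 0" "t > 0"
  shows "H2 s t = s * log 2 ((s+t)/s) + t * log 2 ((s+t)/t)"
  using assms by (simp add: H2_def phi_def log_divide algebra_simps)

lemma H2_nonneg:
  assumes "s \<ge> 0" "t \<ge> 0" shows "H2 s t \<ge> 0"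
proof (cases "s = 0 \<or> t = 0")
  case True thus ?thesis by auto
next
  case False
  hence "s > 0" "t > 0" using assms by auto
  thus ?thesis by (simp add: H2_pos_form)
qed

lemma H2_zero_iff:
  assumes "s \<ge> 0" "t \<ge> 0" shows "H2 s t = 0 \<longleftrightarrow> s = 0 \<or> t = 0"
proof (cases "s = 0 \<or> t = 0")
  case True thus ?thesis by auto
next
  case False
  hence p: "s > 0" "t > 0" using assms by auto
  have "log 2 ((s+t)/s) > 0" using p by simp
  hence "s * log 2 ((s+t)/s) > 0" using p by simp
  moreover have "t * log 2 ((s+t)/t) \<ge> 0" using p by simp
  ultimately have "H2 s t > 0" using H2_pos_form[OF p] by linarith
  thus ?thesis using False by auto
qed

lemma half_le: "x \<le> y/2 \<Longrightarrow> 2*x \<le> (y::real)" by (simp add: field_simps)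
lemma half_less: "x < y/2 \<Longrightarrow> 2*x < (y::real)" by (simp add: field_simps)

lemma H2_aux:
  fixes s t :: real
  assumes "s > 0" "t > 0"
  shows "2 * (s * ln ((s+t)/(2*s))) \<le> t - s"
    and "s \<noteq> t \<Longrightarrow> 2 * (s * ln ((s+t)/(2*s))) < t - s"
proof -
  have u: "(s+t)/(2*s) > 0" using assms by simp
  have "ln ((s+t)/(2*s)) \<le> (s+t)/(2*s) - 1" using ln_le_minus_one[OF u] .
  hence "s * ln ((s+t)/(2*s)) \<le> s * ((s+t)/(2*s) - 1)" using assms by (simp add: mult_left_mono)
  also have "\<dots> = (t-s)/2" using assms by (simp add: field_simps)
  finally show "2 * (s * ln ((s+t)/(2*s))) \<le> t - s" by (rule half_le)
  assume ne: "s \<noteq> t"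
  have "(s+t)/(2*s) \<noteq> 1" using assms ne by (simp add: field_simps)
  hence "ln ((s+t)/(2*s)) \<noteq> (s+t)/(2*s) - 1" using ln_eq_minus_one[OF u] by blast
  hence "ln ((s+t)/(2*s)) < (s+t)/(2*s) - 1" using ln_le_minus_one[OF u] by linarith
  hence "s * ln ((s+t)/(2*s)) < s * ((s+t)/(2*s) - 1)" using assms by simp
  also have "\<dots> = (t-s)/2" using assms by (simp add: field_simps)
  finally show "2 * (s * ln ((s+t)/(2*s))) < t - s" by (rule half_less)
qed

lemma H2_form2:
  assumes "s > 0" "t > 0"
  shows "H2 s t - (s+t) = (s * ln ((s+t)/(2*s)) + t * ln ((t+s)/(2*t))) / ln 2"
proof -
  have "H2 s t = (s * ln ((s+t)/s) + t * ln ((s+t)/t)) / ln 2"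
    using assms by (simp add: H2_pos_form log_def add_divide_distrib)
  moreover have e1: "ln ((s+t)/(2*s)) = ln ((s+t)/s) - ln 2" 
    using assms by (simp add: ln_div ln_mult)
  moreover have e2: "ln ((t+s)/(2*t)) = ln ((s+t)/t) - ln 2"
    using assms by (simp add: ln_div ln_mult add.commute)
  ultimately show ?thesis by (simp only: e1 e2) (simp add: field_simps)
qed

lemma H2_le:
  assumes "s \<ge> 0" "t \<ge> 0" shows "H2 s t \<le> s + t"
proof (cases "s = 0 \<or> t = 0")
  case True thus ?thesis using assms by auto
next
  case False
  hence p: "s > 0" "t > 0" using assms by auto
  have "s * ln ((s+t)/(2*s)) + t * ln ((t+s)/(2*t)) \<le> 0"
    using H2_aux(1)[OF p] H2_aux(1)[OF p(2) p(1)] by linarith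
  hence "(s * ln ((s+t)/(2*s)) + t * ln ((t+s)/(2*t))) / ln 2 \<le> 0"
    by (simp add: divide_nonpos_pos)
  thus ?thesis using H2_form2[OF p] by linarith
qed

lemma H2_full_iff:
  assumes "s \<ge> 0" "t \<ge> 0" shows "H2 s t = s + t \<longleftrightarrow> s = t"
proof
  assume "s = t"
  thus "H2 s t = s + t"
    by (cases "s = 0") (simp_all add: H2_def phi_def log_mult algebra_simps)
next
  assume eq: "H2 s t = s + t"
  show "s = t"
  proof (rule ccontr)
    assume ne: "s \<noteq> t"
    show False
    proof (cases "s = 0 \<or> t = 0")
      case True thus False using eq ne assms by auto
    next
      case False
      hence p: "s > 0" "t > 0" using assms by auto
      have "s * ln ((s+t)/(2*s)) + t * ln ((t+s)/(2*t)) < 0"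
        using H2_aux(2)[OF p ne] H2_aux(2)[OF p(2) p(1)] ne by linarith
      hence "(s * ln ((s+t)/(2*s)) + t * ln ((t+s)/(2*t))) / ln 2 < 0"
        by (simp add: divide_neg_pos)
      thus False using H2_form2[OF p] eq by linarith
    qed
  qed
qed




lemma fib:
  fixes P :: "'z::finite \<Rightarrow> real"
  shows "(\<Sum>b\<in>g`UNIV. (\<Sum>z | f z = a \<and> g z = b. P z)) = (\<Sum>z | f z = a. P z)"
proof -
  have "(\<Sum>b\<in>g`UNIV. (\<Sum>z\<in>{x. x \<in> {z. f z = a} \<and> g x = b}. P z)) = (\<Sum>z\<in>{z. f z = a}. P z)"
    by (rule sum.group) auto
  thus ?thesis by simp
qed

lemma fib_le:
  fixes P :: "'z::finite \<Rightarrow> real"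
  assumes "\<And>z. P z \<ge> 0"
  shows "(\<Sum>z | f z = a \<and> g z = b. P z) \<le> (\<Sum>z | f z = a. P z)"
  by (rule sum_mono2) (auto simp: assms)

lemma mi_phi:
  fixes P :: "'z::finite \<Rightarrow> real"
  assumes nn: "\<And>z. P z \<ge> 0"
  shows "mutual_info P f g =
    (\<Sum>a\<in>f`UNIV. \<Sum>b\<in>g`UNIV. phi (\<Sum>z | f z = a \<and> g z = b. P z))
    - (\<Sum>a\<in>f`UNIV. phi (\<Sum>z | f z = a. P z))
    - (\<Sum>b\<in>g`UNIV. phi (\<Sum>z | g z = b. P z))"
proof -
  define pj where "pj a b = (\<Sum>z | f z = a \<and> g z = b. P z)" for a b
  define pf where "pf a = (\<Sum>z | f z = a. P z)" for a
  define pg where "pg b = (\<Sum>z | g z = b. P z)" for b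
  have f1: "(\<Sum>b\<in>g`UNIV. pj a b) = pf a" for a unfolding pj_def pf_def by (rule fib)
  have f2: "(\<Sum>a\<in>f`UNIV. pj a b) = pg b" for b
    unfolding pj_def pg_def using fib[where f=g and g=f and a=b and P=P] by (simp add: conj_commute)
  have l1: "pj a b \<le> pf a" for a b unfolding pj_def pf_def by (rule fib_le[OF nn])
  have l2: "pj a b \<le> pg b" for a b unfolding pj_def pg_def
    using fib_le[OF nn, where f=g and g=f and a=b and b=a] by (simp add: conj_commute)
  have l0: "pj a b \<ge> 0" for a b unfolding pj_def by (rule sum_nonneg) (simp add: nn)
  have trm: "(if pj a b > 0 then pj a b * log 2 (pj a b / (pf a * pg b)) else 0)
      = phi (pj a b) - pj a b * log 2 (pf a) - pj a b * log 2 (pg b)" for a b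
  proof (cases "pj a b > 0")
    case True
    hence "pf a > 0" "pg b > 0" using l1[of a b] l2[of a b] by linarith+
    thus ?thesis using True by (simp add: phi_def log_divide log_mult algebra_simps)
  next
    case False
    hence "pj a b = 0" using l0[of a b] by linarith
    thus ?thesis by simp
  qed
  have "mutual_info P f g = (\<Sum>a\<in>f`UNIV. \<Sum>b\<in>g`UNIV.
      phi (pj a b) - pj a b * log 2 (pf a) - pj a b * log 2 (pg b))"
    unfolding mutual_info_def Let_def pj_def[symmetric] pf_def[symmetric] pg_def[symmetric] trm ..
  also have "\<dots> = (\<Sum>a\<in>f`UNIV. \<Sum>b\<in>g`UNIV. phi (pj a b))
      - (\<Sum>a\<in>f`UNIV. \<Sum>b\<in>g`UNIV. pj a b * log 2 (pf a))
      - (\<Sum>a\<in>f`UNIV. \<Sum>b\<in>g`UNIV. pj a b * log 2 (pg b))"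
    by (simp add: sum_subtractf)
  also have "(\<Sum>a\<in>f`UNIV. \<Sum>b\<in>g`UNIV. pj a b * log 2 (pf a)) = (\<Sum>a\<in>f`UNIV. phi (pf a))"
    by (simp add: sum_distrib_right[symmetric] f1 phi_def)
  also have "(\<Sum>a\<in>f`UNIV. \<Sum>b\<in>g`UNIV. pj a b * log 2 (pg b)) = (\<Sum>b\<in>g`UNIV. \<Sum>a\<in>f`UNIV. pj a b * log 2 (pg b))"
    by (rule sum.swap)
  also have "\<dots> = (\<Sum>b\<in>g`UNIV. phi (pg b))"
    by (simp add: sum_distrib_right[symmetric] f2 phi_def)
  finally show ?thesis unfolding pj_def pf_def pg_def .
qed




lemma sum_triple:
  fixes F :: "bool \<times> bool \<times> 'y::finite \<Rightarrow> real"
  shows "(\<Sum>z | Q z. F z) = (\<Sum>a\<in>UNIV. \<Sum>b\<in>UNIV. \<Sum>y\<in>UNIV. if Q (a,b,y) then F (a,b,y) else 0)"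
proof -
  have "(\<Sum>z | Q z. F z) = (\<Sum>z\<in>UNIV. if Q z then F z else 0)"
    by (simp add: sum.If_cases)
  also have "\<dots> = (\<Sum>a\<in>UNIV. \<Sum>bc\<in>UNIV. if Q (a,bc) then F (a,bc) else 0)"
    by (simp add: sum.cartesian_product UNIV_Times_UNIV[symmetric] del: UNIV_Times_UNIV)
  also have "\<dots> = (\<Sum>a\<in>UNIV. \<Sum>b\<in>UNIV. \<Sum>y\<in>UNIV. if Q (a,b,y) then F (a,b,y) else 0)"
    by (simp add: sum.cartesian_product UNIV_Times_UNIV[symmetric] del: UNIV_Times_UNIV)
  finally show ?thesis .
qed

lemma sum_pair:
  fixes F :: "'a::finite \<times> 'b::finite \<Rightarrow> real"
  shows "(\<Sum>z\<in>UNIV. F z) = (\<Sum>a\<in>UNIV. \<Sum>b\<in>UNIV. F (a,b))"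
  by (simp add: sum.cartesian_product UNIV_Times_UNIV[symmetric] del: UNIV_Times_UNIV)

lemma test:
  fixes W :: "bool \<Rightarrow> bool \<Rightarrow> 'y::finite \<Rightarrow> real"
  shows "(\<Sum>z | X1 z = a \<and> (Yout z, X2 z) = (y, b). mac_joint W z) = W a b y / 4"
  unfolding sum_triple by (cases a; cases b) (simp_all add: X1_def X2_def Yout_def mac_joint_def UNIV_bool if_distrib sum.delta)

lemma test2:
  fixes W :: "bool \<Rightarrow> bool \<Rightarrow> 'y::finite \<Rightarrow> real"
  shows "(\<Sum>z | Yout z = y. mac_joint W z) = (W True True y + W True False y + W False True y + W False False y) / 4"
  by (simp add: sum_triple X1_def X2_def Yout_def mac_joint_def UNIV_bool sum.delta)

lemma test3:
  fixes W :: "bool \<Rightarrow> bool \<Rightarrow> 'y::finite \<Rightarrow> real"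
  assumes "is_binary_mac W"
  shows "(\<Sum>z | X1 z = a. mac_joint W z) = 1/2"
  using assms by (cases a) (simp_all add: is_binary_mac_def sum_triple X1_def X2_def Yout_def mac_joint_def UNIV_bool sum_divide_distrib[symmetric])




lemma mac_nn: "is_binary_mac W \<Longrightarrow> mac_joint W z \<ge> 0"
  by (simp add: is_binary_mac_def mac_joint_def)

lemma phi_half: "phi (1/2) = -1/2" by (simp add: phi_def log_divide)
lemma phi_quarter: "phi (1/4) = -1/2"
proof -
  have "log 2 (4::real) = log 2 (2*2)" by simp
  also have "\<dots> = 2" by (subst log_mult) auto
  finally have "log 2 (1/4::real) = -2" by (simp add: log_divide)
  thus ?thesis by (simp add: phi_def)
qed

lemma I1_formula:
  fixes W :: "bool \<Rightarrow> bool \<Rightarrow> 'y::finite \<Rightarrow> real"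
  assumes mac: "is_binary_mac W"
  shows "mutual_info (mac_joint W) X1 (\<lambda>z. (Yout z, X2 z)) =
     1 - (\<Sum>y\<in>UNIV. H2 (W True True y/4) (W False True y/4) + H2 (W True False y/4) (W False False y/4))"
proof -
  have s1: "surj (X1 :: bool \<times> bool \<times> 'y \<Rightarrow> bool)" by (rule surjI[where f="\<lambda>a. (a,undefined)"]) (simp add: X1_def)
  have s2: "surj (\<lambda>z::bool \<times> bool \<times> 'y. (Yout z, X2 z))"
    by (rule surjI[where f="\<lambda>(y,b). (undefined,b,y)"]) (auto simp: X2_def Yout_def)
  have f1: "(\<Sum>z | X1 z = a \<and> (Yout z, X2 z) = (y, b). mac_joint W z) = W a b y / 4" for a b y
    unfolding sum_triple by (cases a; cases b) (simp_all add: X1_def X2_def Yout_def mac_joint_def UNIV_bool if_distrib sum.delta)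
  have f2: "(\<Sum>z | X1 z = a. mac_joint W z) = 1/2" for a
    unfolding sum_triple using mac by (cases a) (simp_all add: is_binary_mac_def X1_def X2_def Yout_def mac_joint_def UNIV_bool sum_divide_distrib[symmetric])
  have f3: "(\<Sum>z | (Yout z, X2 z) = (y, b). mac_joint W z) = W True b y / 4 + W False b y / 4" for b y
    unfolding sum_triple by (cases b) (simp_all add: X1_def X2_def Yout_def mac_joint_def UNIV_bool if_distrib sum.delta)
  have "mutual_info (mac_joint W) X1 (\<lambda>z. (Yout z, X2 z)) =
     (\<Sum>a\<in>UNIV. \<Sum>y\<in>UNIV. \<Sum>b\<in>UNIV. phi (W a b y / 4)) - 2 * phi (1/2)
      - (\<Sum>y\<in>UNIV. \<Sum>b\<in>UNIV. phi (W True b y / 4 + W False b y / 4))"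
    unfolding mi_phi[OF mac_nn[OF mac]] s1 s2 sum_pair f1 f2 f3 by (simp add: UNIV_bool card_UNIV_bool)
  also have "\<dots> = 1 - (\<Sum>y\<in>UNIV. H2 (W True True y/4) (W False True y/4) + H2 (W True False y/4) (W False False y/4))"
    by (simp add: UNIV_bool phi_half H2_def sum.distrib sum_subtractf algebra_simps)
  finally show ?thesis .
qed




lemma I2_formula:
  fixes W :: "bool \<Rightarrow> bool \<Rightarrow> 'y::finite \<Rightarrow> real"
  assumes mac: "is_binary_mac W"
  shows "mutual_info (mac_joint W) X2 (\<lambda>z. (Yout z, X1 z)) =
     1 - (\<Sum>y\<in>UNIV. H2 (W True True y/4) (W True False y/4) + H2 (W False True y/4) (W False False y/4))"
proof -
  have s1: "surj (X2 :: bool \<times> bool \<times> 'y \<Rightarrow> bool)" by (rule surjI[where f="\<lambda>a. (undefined,a,undefined)"]) (simp add: X2_def)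
  have s2: "surj (\<lambda>z::bool \<times> bool \<times> 'y. (Yout z, X1 z))"
    by (rule surjI[where f="\<lambda>(y,a). (a,undefined,y)"]) (auto simp: X1_def Yout_def)
  have f1: "(\<Sum>z | X2 z = b \<and> (Yout z, X1 z) = (y, a). mac_joint W z) = W a b y / 4" for a b y
    unfolding sum_triple by (cases a; cases b) (simp_all add: X1_def X2_def Yout_def mac_joint_def UNIV_bool if_distrib sum.delta)
  have f2: "(\<Sum>z | X2 z = b. mac_joint W z) = 1/2" for b
    unfolding sum_triple using mac by (cases b) (simp_all add: is_binary_mac_def X1_def X2_def Yout_def mac_joint_def UNIV_bool sum_divide_distrib[symmetric])
  have f3: "(\<Sum>z | (Yout z, X1 z) = (y, a). mac_joint W z) = W a True y / 4 + W a False y / 4" for a y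
    unfolding sum_triple by (cases a) (simp_all add: X1_def X2_def Yout_def mac_joint_def UNIV_bool if_distrib sum.delta)
  have "mutual_info (mac_joint W) X2 (\<lambda>z. (Yout z, X1 z)) =
     (\<Sum>b\<in>UNIV. \<Sum>y\<in>UNIV. \<Sum>a\<in>UNIV. phi (W a b y / 4)) - 2 * phi (1/2)
      - (\<Sum>y\<in>UNIV. \<Sum>a\<in>UNIV. phi (W a True y / 4 + W a False y / 4))"
    unfolding mi_phi[OF mac_nn[OF mac]] s1 s2 sum_pair f1 f2 f3 by (simp add: UNIV_bool)
  also have "\<dots> = 1 - (\<Sum>y\<in>UNIV. H2 (W True True y/4) (W True False y/4) + H2 (W False True y/4) (W False False y/4))"
    by (simp add: UNIV_bool phi_half H2_def sum.distrib sum_subtractf algebra_simps)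
  finally show ?thesis .
qed

lemma I3_formula:
  fixes W :: "bool \<Rightarrow> bool \<Rightarrow> 'y::finite \<Rightarrow> real"
  assumes mac: "is_binary_mac W"
  shows "mutual_info (mac_joint W) (\<lambda>z. (X1 z, X2 z)) Yout =
     2 - (\<Sum>y\<in>UNIV. H2 (W True True y/4 + W True False y/4) (W False True y/4 + W False False y/4)
            + H2 (W True True y/4) (W True False y/4) + H2 (W False True y/4) (W False False y/4))"
proof -
  have s1: "surj (\<lambda>z::bool \<times> bool \<times> 'y. (X1 z, X2 z))"
    by (rule surjI[where f="\<lambda>(a,b). (a,b,undefined)"]) (auto simp: X1_def X2_def)
  have s2: "surj (Yout :: bool \<times> bool \<times> 'y \<Rightarrow> 'y)" by (rule surjI[where f="\<lambda>y. (undefined,undefined,y)"]) (simp add: Yout_def)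
  have f1: "(\<Sum>z | (X1 z, X2 z) = (a, b) \<and> Yout z = y. mac_joint W z) = W a b y / 4" for a b y
    unfolding sum_triple by (cases a; cases b) (simp_all add: X1_def X2_def Yout_def mac_joint_def UNIV_bool if_distrib sum.delta)
  have f2: "(\<Sum>z | (X1 z, X2 z) = (a, b). mac_joint W z) = 1/4" for a b
    unfolding sum_triple using mac by (cases a; cases b) (simp_all add: is_binary_mac_def X1_def X2_def Yout_def mac_joint_def UNIV_bool sum_divide_distrib[symmetric])
  have f3: "(\<Sum>z | Yout z = y. mac_joint W z) = W True True y/4 + W True False y/4 + (W False True y/4 + W False False y/4)" for y
    unfolding sum_triple by (simp add: X1_def X2_def Yout_def mac_joint_def UNIV_bool if_distrib sum.delta)
  have "mutual_info (mac_joint W) (\<lambda>z. (X1 z, X2 z)) Yout =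
     (\<Sum>a\<in>UNIV. \<Sum>b\<in>UNIV. \<Sum>y\<in>UNIV. phi (W a b y / 4)) - 4 * phi (1/4)
      - (\<Sum>y\<in>UNIV. phi (W True True y/4 + W True False y/4 + (W False True y/4 + W False False y/4)))"
    unfolding mi_phi[OF mac_nn[OF mac]] s1 s2 sum_pair f1 f2 f3 by (simp add: UNIV_bool)
  also have "\<dots> = 2 - (\<Sum>y\<in>UNIV. H2 (W True True y/4 + W True False y/4) (W False True y/4 + W False False y/4)
            + H2 (W True True y/4) (W True False y/4) + H2 (W False True y/4) (W False False y/4))"
    by (simp add: UNIV_bool phi_quarter H2_def sum.distrib sum_subtractf algebra_simps)
  finally show ?thesis .
qed

lemma J1_formula:
  fixes W :: "bool \<Rightarrow> bool \<Rightarrow> 'y::finite \<Rightarrow> real"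
  assumes mac: "is_binary_mac W"
  shows "mutual_info (mac_joint W) X1 Yout =
     1 - (\<Sum>y\<in>UNIV. H2 (W True True y/4 + W True False y/4) (W False True y/4 + W False False y/4))"
proof -
  have s1: "surj (X1 :: bool \<times> bool \<times> 'y \<Rightarrow> bool)" by (rule surjI[where f="\<lambda>a. (a,undefined)"]) (simp add: X1_def)
  have s2: "surj (Yout :: bool \<times> bool \<times> 'y \<Rightarrow> 'y)" by (rule surjI[where f="\<lambda>y. (undefined,undefined,y)"]) (simp add: Yout_def)
  have f1: "(\<Sum>z | X1 z = a \<and> Yout z = y. mac_joint W z) = W a True y / 4 + W a False y / 4" for a y
    unfolding sum_triple by (cases a) (simp_all add: X1_def X2_def Yout_def mac_joint_def UNIV_bool if_distrib sum.delta)
  have f2: "(\<Sum>z | X1 z = a. mac_joint W z) = 1/2" for a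
    unfolding sum_triple using mac by (cases a) (simp_all add: is_binary_mac_def X1_def X2_def Yout_def mac_joint_def UNIV_bool sum_divide_distrib[symmetric])
  have f3: "(\<Sum>z | Yout z = y. mac_joint W z) = W True True y/4 + W True False y/4 + (W False True y/4 + W False False y/4)" for y
    unfolding sum_triple by (simp add: X1_def X2_def Yout_def mac_joint_def UNIV_bool if_distrib sum.delta)
  have "mutual_info (mac_joint W) X1 Yout =
     (\<Sum>a\<in>UNIV. \<Sum>y\<in>UNIV. phi (W a True y / 4 + W a False y / 4)) - 2 * phi (1/2)
      - (\<Sum>y\<in>UNIV. phi (W True True y/4 + W True False y/4 + (W False True y/4 + W False False y/4)))"
    unfolding mi_phi[OF mac_nn[OF mac]] s1 s2 f1 f2 f3 by (simp add: UNIV_bool)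
  also have "\<dots> = 1 - (\<Sum>y\<in>UNIV. H2 (W True True y/4 + W True False y/4) (W False True y/4 + W False False y/4))"
    by (simp add: UNIV_bool phi_half H2_def sum.distrib sum_subtractf algebra_simps)
  finally show ?thesis .
qed

lemma J2_formula:
  fixes W :: "bool \<Rightarrow> bool \<Rightarrow> 'y::finite \<Rightarrow> real"
  assumes mac: "is_binary_mac W"
  shows "mutual_info (mac_joint W) X2 Yout =
     1 - (\<Sum>y\<in>UNIV. H2 (W True True y/4 + W False True y/4) (W True False y/4 + W False False y/4))"
proof -
  have s1: "surj (X2 :: bool \<times> bool \<times> 'y \<Rightarrow> bool)" by (rule surjI[where f="\<lambda>a. (undefined,a,undefined)"]) (simp add: X2_def)
  have s2: "surj (Yout :: bool \<times> bool \<times> 'y \<Rightarrow> 'y)" by (rule surjI[where f="\<lambda>y. (undefined,undefined,y)"]) (simp add: Yout_def)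
  have f1: "(\<Sum>z | X2 z = b \<and> Yout z = y. mac_joint W z) = W True b y / 4 + W False b y / 4" for b y
    unfolding sum_triple by (cases b) (simp_all add: X1_def X2_def Yout_def mac_joint_def UNIV_bool if_distrib sum.delta)
  have f2: "(\<Sum>z | X2 z = b. mac_joint W z) = 1/2" for b
    unfolding sum_triple using mac by (cases b) (simp_all add: is_binary_mac_def X1_def X2_def Yout_def mac_joint_def UNIV_bool sum_divide_distrib[symmetric])
  have f3: "(\<Sum>z | Yout z = y. mac_joint W z) = W True True y/4 + W False True y/4 + (W True False y/4 + W False False y/4)" for y
    unfolding sum_triple by (simp add: X1_def X2_def Yout_def mac_joint_def UNIV_bool if_distrib sum.delta)
  have "mutual_info (mac_joint W) X2 Yout =
     (\<Sum>b\<in>UNIV. \<Sum>y\<in>UNIV. phi (W True b y / 4 + W False b y / 4)) - 2 * phi (1/2)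
      - (\<Sum>y\<in>UNIV. phi (W True True y/4 + W False True y/4 + (W True False y/4 + W False False y/4)))"
    unfolding mi_phi[OF mac_nn[OF mac]] s1 s2 f1 f2 f3 by (simp add: UNIV_bool)
  also have "\<dots> = 1 - (\<Sum>y\<in>UNIV. H2 (W True True y/4 + W False True y/4) (W True False y/4 + W False False y/4))"
    by (simp add: UNIV_bool phi_half H2_def sum.distrib sum_subtractf algebra_simps)
  finally show ?thesis .
qed

lemma J3_formula:
  fixes W :: "bool \<Rightarrow> bool \<Rightarrow> 'y::finite \<Rightarrow> real"
  assumes mac: "is_binary_mac W"
  shows "mutual_info (mac_joint W) (\<lambda>z. X1 z \<noteq> X2 z) Yout =
     1 - (\<Sum>y\<in>UNIV. H2 (W True False y/4 + W False True y/4) (W True True y/4 + W False False y/4))"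
proof -
  have s1: "surj (\<lambda>z::bool \<times> bool \<times> 'y. X1 z \<noteq> X2 z)" by (rule surjI[where f="\<lambda>a. (a,False,undefined)"]) (simp add: X1_def X2_def)
  have s2: "surj (Yout :: bool \<times> bool \<times> 'y \<Rightarrow> 'y)" by (rule surjI[where f="\<lambda>y. (undefined,undefined,y)"]) (simp add: Yout_def)
  have f1: "(\<Sum>z | (X1 z \<noteq> X2 z) = c \<and> Yout z = y. mac_joint W z) =
     (if c then W True False y / 4 + W False True y / 4 else W True True y / 4 + W False False y / 4)" for c y
    unfolding sum_triple by (cases c) (simp_all add: X1_def X2_def Yout_def mac_joint_def UNIV_bool if_distrib sum.delta)
  have f2: "(\<Sum>z | (X1 z \<noteq> X2 z) = c. mac_joint W z) = 1/2" for c
    unfolding sum_triple using mac by (cases c) (simp_all add: is_binary_mac_def X1_def X2_def Yout_def mac_joint_def UNIV_bool sum_divide_distrib[symmetric])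
  have f3: "(\<Sum>z | Yout z = y. mac_joint W z) = W True False y/4 + W False True y/4 + (W True True y/4 + W False False y/4)" for y
    unfolding sum_triple by (simp add: X1_def X2_def Yout_def mac_joint_def UNIV_bool if_distrib sum.delta)
  have "mutual_info (mac_joint W) (\<lambda>z. X1 z \<noteq> X2 z) Yout =
     (\<Sum>y\<in>UNIV. phi (W True False y / 4 + W False True y / 4) + phi (W True True y / 4 + W False False y / 4)) - 2 * phi (1/2)
      - (\<Sum>y\<in>UNIV. phi (W True False y/4 + W False True y/4 + (W True True y/4 + W False False y/4)))"
    unfolding mi_phi[OF mac_nn[OF mac]] s1 s2 f1 f2 f3 by (simp add: UNIV_bool sum.distrib)
  also have "\<dots> = 1 - (\<Sum>y\<in>UNIV. H2 (W True False y/4 + W False True y/4) (W True True y/4 + W False False y/4))"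
    by (simp add: UNIV_bool phi_half H2_def sum.distrib sum_subtractf algebra_simps)
  finally show ?thesis .
qed




definition "qA a b c d = H2 a c + H2 b d"
definition "qB a b c d = H2 a b + H2 c d"
definition "qR a b c d = H2 (a+b) (c+d)"
definition "qC a b c d = H2 (a+c) (b+d)"
definition "qD a b c d = H2 (b+c) (a+d)"

context
  fixes a b c d :: real
  assumes nn: "a \<ge> 0" "b \<ge> 0" "c \<ge> 0" "d \<ge> 0"
begin

lemma qA_b: "0 \<le> qA a b c d" "qA a b c d \<le> a+b+c+d"
  using H2_nonneg[of a c] H2_nonneg[of b d] H2_le[of a c] H2_le[of b d] nn by (auto simp: qA_def)
lemma qB_b: "0 \<le> qB a b c d" "qB a b c d \<le> a+b+c+d"
  using H2_nonneg[of a b] H2_nonneg[of c d] H2_le[of a b] H2_le[of c d] nn by (auto simp: qB_def)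
lemma qR_b: "0 \<le> qR a b c d" "qR a b c d \<le> a+b+c+d"
  using H2_nonneg[of "a+b" "c+d"] H2_le[of "a+b" "c+d"] nn by (auto simp: qR_def)
lemma qC_b: "0 \<le> qC a b c d" "qC a b c d \<le> a+b+c+d"
  using H2_nonneg[of "a+c" "b+d"] H2_le[of "a+c" "b+d"] nn by (auto simp: qC_def)
lemma qD_b: "0 \<le> qD a b c d" "qD a b c d \<le> a+b+c+d"
  using H2_nonneg[of "b+c" "a+d"] H2_le[of "b+c" "a+d"] nn by (auto simp: qD_def)

lemma qE_id: "qR a b c d + qB a b c d = qC a b c d + qA a b c d"
  by (simp add: qR_def qB_def qC_def qA_def H2_def algebra_simps)

lemma qA0: "qA a b c d = 0 \<longleftrightarrow> (a=0\<or>c=0)\<and>(b=0\<or>d=0)"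
  using H2_nonneg[of a c] H2_nonneg[of b d] H2_zero_iff[of a c] H2_zero_iff[of b d] nn
  by (auto simp: qA_def)
lemma qAS: "qA a b c d = a+b+c+d \<longleftrightarrow> a=c \<and> b=d"
  using H2_le[of a c] H2_le[of b d] H2_full_iff[of a c] H2_full_iff[of b d] nn
  by (auto simp: qA_def)
lemma qB0: "qB a b c d = 0 \<longleftrightarrow> (a=0\<or>b=0)\<and>(c=0\<or>d=0)"
  using H2_nonneg[of a b] H2_nonneg[of c d] H2_zero_iff[of a b] H2_zero_iff[of c d] nn
  by (auto simp: qB_def)
lemma qBS: "qB a b c d = a+b+c+d \<longleftrightarrow> a=b \<and> c=d"
  using H2_le[of a b] H2_le[of c d] H2_full_iff[of a b] H2_full_iff[of c d] nn
  by (auto simp: qB_def)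
lemma qR0: "qR a b c d = 0 \<longleftrightarrow> (a+b=0 \<or> c+d=0)"
  using H2_zero_iff[of "a+b" "c+d"] nn by (auto simp: qR_def)
lemma qRS: "qR a b c d = a+b+c+d \<longleftrightarrow> a+b = c+d"
  using H2_full_iff[of "a+b" "c+d"] nn by (auto simp: qR_def algebra_simps)
lemma qC0: "qC a b c d = 0 \<longleftrightarrow> (a+c=0 \<or> b+d=0)"
  using H2_zero_iff[of "a+c" "b+d"] nn by (auto simp: qC_def)
lemma qCS: "qC a b c d = a+b+c+d \<longleftrightarrow> a+c = b+d"
  using H2_full_iff[of "a+c" "b+d"] nn by (auto simp: qC_def algebra_simps)
lemma qD0: "qD a b c d = 0 \<longleftrightarrow> (b+c=0 \<or> a+d=0)"
  using H2_zero_iff[of "b+c" "a+d"] nn by (auto simp: qD_def)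
lemma qDS: "qD a b c d = a+b+c+d \<longleftrightarrow> b+c = a+d"
  using H2_full_iff[of "b+c" "a+d"] nn by (auto simp: qD_def algebra_simps)

lemmas qiff = qA0 qAS qB0 qBS qR0 qRS qC0 qCS qD0 qDS

lemma P1: "qR a b c d = 0 \<Longrightarrow> qC a b c d = 0 \<Longrightarrow> qA a b c d = 0 \<and> qB a b c d = 0 \<and> qD a b c d = 0"
  unfolding qiff using nn by auto
lemma P2: "qR a b c d = 0 \<Longrightarrow> qD a b c d = 0 \<Longrightarrow> qA a b c d = 0 \<and> qB a b c d = 0 \<and> qC a b c d = 0"
  unfolding qiff using nn by auto
lemma P3: "qC a b c d = 0 \<Longrightarrow> qD a b c d = 0 \<Longrightarrow> qA a b c d = 0 \<and> qB a b c d = 0 \<and> qR a b c d = 0"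
  unfolding qiff using nn by auto
lemma P4: "qR a b c d = a+b+c+d \<Longrightarrow> qB a b c d = a+b+c+d \<Longrightarrow> qA a b c d = a+b+c+d \<and> qC a b c d = a+b+c+d \<and> qD a b c d = a+b+c+d"
  unfolding qiff using nn by auto
lemma P5: "qB a b c d = a+b+c+d \<Longrightarrow> qD a b c d = a+b+c+d" "qA a b c d = a+b+c+d \<Longrightarrow> qD a b c d = a+b+c+d"
  unfolding qiff using nn by auto
lemma P6: "qA a b c d = 0 \<Longrightarrow> qB a b c d = 0 \<Longrightarrow> qR a b c d = a+b+c+d \<Longrightarrow> qC a b c d = a+b+c+d \<Longrightarrow> qD a b c d = 0"
  unfolding qiff using nn by auto
lemma P7: "qR a b c d = a+b+c+d \<Longrightarrow> qC a b c d = a+b+c+d \<Longrightarrow> qD a b c d = a+b+c+d \<Longrightarrow> qA a b c d = a+b+c+d \<and> qB a b c d = a+b+c+d"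
  unfolding qiff using nn by auto
lemma P8: "qR a b c d = 0 \<Longrightarrow> qC a b c d = a+b+c+d \<Longrightarrow> qD a b c d = a+b+c+d \<Longrightarrow> qA a b c d = 0 \<and> qB a b c d = a+b+c+d"
  unfolding qiff using nn by auto
lemma P9: "qC a b c d = 0 \<Longrightarrow> qR a b c d = a+b+c+d \<Longrightarrow> qD a b c d = a+b+c+d \<Longrightarrow> qA a b c d = a+b+c+d \<and> qB a b c d = 0"
  unfolding qiff using nn by auto
lemma P10: "qR a b c d = a+b+c+d \<Longrightarrow> qC a b c d = a+b+c+d \<Longrightarrow> qD a b c d = 0 \<Longrightarrow> qA a b c d = 0 \<and> qB a b c d = 0"
  unfolding qiff using nn by auto

end



lemma sum_zero_all:
  fixes f :: "'y::finite \<Rightarrow> real"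
  assumes "\<And>y. 0 \<le> f y" "(\<Sum>y\<in>UNIV. f y) = 0" shows "f y = 0"
  using assms sum_nonneg_eq_0_iff[of UNIV f] by auto

lemma sum_full_all:
  fixes f :: "'y::finite \<Rightarrow> real"
  assumes "\<And>y. f y \<le> g y" "(\<Sum>y\<in>UNIV. f y) = (\<Sum>y\<in>UNIV. g y)" shows "f y = g y"
proof -
  have s0: "(\<Sum>y\<in>UNIV. g y - f y) = 0" using assms(2) by (simp add: sum_subtractf)
  have "g y - f y = 0"
    by (rule sum_zero_all[of "\<lambda>y. g y - f y", OF _ s0]) (use assms(1) in simp)
  thus ?thesis by simp
qed

definition Tab :: "(real\<times>real\<times>real\<times>real\<times>real\<times>real) set" where "Tab = {(0,0,0,0,0,0),(1,1,2,1,1,1),(0,1,1,0,1,1),(1,0,1,1,0,1),(0,0,1,1,1,0)}"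

lemma classify_abs:
  fixes a b c d :: "'y::finite \<Rightarrow> real"
  assumes nn: "\<And>y. a y \<ge> 0" "\<And>y. b y \<ge> 0" "\<And>y. c y \<ge> 0" "\<And>y. d y \<ge> 0"
    and tot: "(\<Sum>y\<in>UNIV. a y + b y + c y + d y) = 1"
  defines "sA \<equiv> \<Sum>y\<in>UNIV. qA (a y) (b y) (c y) (d y)"
    and "sB \<equiv> \<Sum>y\<in>UNIV. qB (a y) (b y) (c y) (d y)"
    and "sR \<equiv> \<Sum>y\<in>UNIV. qR (a y) (b y) (c y) (d y)"
    and "sC \<equiv> \<Sum>y\<in>UNIV. qC (a y) (b y) (c y) (d y)"
    and "sD \<equiv> \<Sum>y\<in>UNIV. qD (a y) (b y) (c y) (d y)"
  shows "0 \<le> sA \<and> sA \<le> 1 \<and> 0 \<le> sB \<and> sB \<le> 1 \<and> 0 \<le> sR \<and> sR \<le> 1 \<and> 0 \<le> sC \<and> sC \<le> 1 \<and> 0 \<le> sD \<and> sD \<le> 1"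
    and "sA \<in> {0,1} \<Longrightarrow> sB \<in> {0,1} \<Longrightarrow> sR + sB \<in> {0,1,2} \<Longrightarrow> (sA,sB,sR+sB,sR,sC,sD) \<in> Tab"
    and "sR \<in> {0,1} \<Longrightarrow> sC \<in> {0,1} \<Longrightarrow> sD \<in> {0,1} \<Longrightarrow> (sA,sB,sR+sB,sR,sC,sD) \<in> Tab"
proof -
  define S where "S y = a y + b y + c y + d y" for y
  have nny: "a y \<ge> 0" "b y \<ge> 0" "c y \<ge> 0" "d y \<ge> 0" for y using nn by auto
  have bA: "0 \<le> qA (a y) (b y) (c y) (d y)" "qA (a y) (b y) (c y) (d y) \<le> S y" for y using qA_b[OF nny[of y]] by (auto simp: S_def)
  have bB: "0 \<le> qB (a y) (b y) (c y) (d y)" "qB (a y) (b y) (c y) (d y) \<le> S y" for y using qB_b[OF nny[of y]] by (auto simp: S_def)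
  have bR: "0 \<le> qR (a y) (b y) (c y) (d y)" "qR (a y) (b y) (c y) (d y) \<le> S y" for y using qR_b[OF nny[of y]] by (auto simp: S_def)
  have bC: "0 \<le> qC (a y) (b y) (c y) (d y)" "qC (a y) (b y) (c y) (d y) \<le> S y" for y using qC_b[OF nny[of y]] by (auto simp: S_def)
  have bD: "0 \<le> qD (a y) (b y) (c y) (d y)" "qD (a y) (b y) (c y) (d y) \<le> S y" for y using qD_b[OF nny[of y]] by (auto simp: S_def)
  have totS: "(\<Sum>y\<in>UNIV. S y) = 1" using tot by (simp add: S_def)
  have ub: "(\<Sum>y\<in>UNIV. f y) \<le> 1" if "\<And>y. f y \<le> S y" for f :: "'y \<Rightarrow> real"
    using sum_mono[of UNIV f S] that totS by auto
  have lb: "(\<Sum>y\<in>UNIV. f y) \<ge> 0" if "\<And>y. f y \<ge> 0" for f :: "'y \<Rightarrow> real"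
    using sum_nonneg[of UNIV f] that by auto
  have z: "f y = 0" if "\<And>y. 0 \<le> f y" "(\<Sum>y\<in>UNIV. f y) = 0" for f :: "'y \<Rightarrow> real" and y
    by (rule sum_zero_all[of f, OF that])
  have o: "f y = S y" if "\<And>y. f y \<le> S y" "(\<Sum>y\<in>UNIV. f y) = 1" for f :: "'y \<Rightarrow> real" and y
    using sum_full_all[of f S, OF that(1)] that(2) totS by simp
  have z': "(\<Sum>y\<in>UNIV. f y) = 0" if "\<And>y. f y = 0" for f :: "'y \<Rightarrow> real" using that by simp
  have o': "(\<Sum>y\<in>UNIV. f y) = 1" if "\<And>y. f y = S y" for f :: "'y \<Rightarrow> real" using that totS by simp
  have eid: "sR + sB = sC + sA" unfolding sR_def sB_def sC_def sA_def
    by (simp add: sum.distrib[symmetric] qE_id[OF nny])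

  have A0: "qA (a y) (b y) (c y) (d y) = 0" if "sA = 0" for y using z[of "\<lambda>y. qA (a y) (b y) (c y) (d y)" y, OF bA(1)] that unfolding sA_def by simp
  have B0: "qB (a y) (b y) (c y) (d y) = 0" if "sB = 0" for y using z[of "\<lambda>y. qB (a y) (b y) (c y) (d y)" y, OF bB(1)] that unfolding sB_def by simp
  have R0: "qR (a y) (b y) (c y) (d y) = 0" if "sR = 0" for y using z[of "\<lambda>y. qR (a y) (b y) (c y) (d y)" y, OF bR(1)] that unfolding sR_def by simp
  have C0: "qC (a y) (b y) (c y) (d y) = 0" if "sC = 0" for y using z[of "\<lambda>y. qC (a y) (b y) (c y) (d y)" y, OF bC(1)] that unfolding sC_def by simp
  have D0: "qD (a y) (b y) (c y) (d y) = 0" if "sD = 0" for y using z[of "\<lambda>y. qD (a y) (b y) (c y) (d y)" y, OF bD(1)] that unfolding sD_def by simp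
  have A1: "qA (a y) (b y) (c y) (d y) = S y" if "sA = 1" for y using o[of "\<lambda>y. qA (a y) (b y) (c y) (d y)" y, OF bA(2)] that unfolding sA_def by simp
  have B1: "qB (a y) (b y) (c y) (d y) = S y" if "sB = 1" for y using o[of "\<lambda>y. qB (a y) (b y) (c y) (d y)" y, OF bB(2)] that unfolding sB_def by simp
  have R1: "qR (a y) (b y) (c y) (d y) = S y" if "sR = 1" for y using o[of "\<lambda>y. qR (a y) (b y) (c y) (d y)" y, OF bR(2)] that unfolding sR_def by simp
  have C1: "qC (a y) (b y) (c y) (d y) = S y" if "sC = 1" for y using o[of "\<lambda>y. qC (a y) (b y) (c y) (d y)" y, OF bC(2)] that unfolding sC_def by simp
  have D1: "qD (a y) (b y) (c y) (d y) = S y" if "sD = 1" for y using o[of "\<lambda>y. qD (a y) (b y) (c y) (d y)" y, OF bD(2)] that unfolding sD_def by simp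
  have A0': "sA = 0" if "\<And>y. qA (a y) (b y) (c y) (d y) = 0" using that unfolding sA_def by simp
  have B0': "sB = 0" if "\<And>y. qB (a y) (b y) (c y) (d y) = 0" using that unfolding sB_def by simp
  have R0': "sR = 0" if "\<And>y. qR (a y) (b y) (c y) (d y) = 0" using that unfolding sR_def by simp
  have C0': "sC = 0" if "\<And>y. qC (a y) (b y) (c y) (d y) = 0" using that unfolding sC_def by simp
  have D0': "sD = 0" if "\<And>y. qD (a y) (b y) (c y) (d y) = 0" using that unfolding sD_def by simp
  have A1': "sA = 1" if "\<And>y. qA (a y) (b y) (c y) (d y) = S y" using o'[OF that] unfolding sA_def .
  have B1': "sB = 1" if "\<And>y. qB (a y) (b y) (c y) (d y) = S y" using o'[OF that] unfolding sB_def .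
  have R1': "sR = 1" if "\<And>y. qR (a y) (b y) (c y) (d y) = S y" using o'[OF that] unfolding sR_def .
  have C1': "sC = 1" if "\<And>y. qC (a y) (b y) (c y) (d y) = S y" using o'[OF that] unfolding sC_def .
  have D1': "sD = 1" if "\<And>y. qD (a y) (b y) (c y) (d y) = S y" using o'[OF that] unfolding sD_def .
  show rng: "0 \<le> sA \<and> sA \<le> 1 \<and> 0 \<le> sB \<and> sB \<le> 1 \<and> 0 \<le> sR \<and> sR \<le> 1 \<and> 0 \<le> sC \<and> sC \<le> 1 \<and> 0 \<le> sD \<and> sD \<le> 1"
    unfolding sA_def sB_def sR_def sC_def sD_def
    by (intro conjI lb ub) (use bA bB bR bC bD in auto)
  show "sA \<in> {0,1} \<Longrightarrow> sB \<in> {0,1} \<Longrightarrow> sR + sB \<in> {0,1,2} \<Longrightarrow> (sA,sB,sR+sB,sR,sC,sD) \<in> Tab"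
  proof -
    assume hA: "sA \<in> {0,1}" and hB: "sB \<in> {0,1}" and hE: "sR + sB \<in> {0,1,2}"
    consider "sR + sB = 0" | "sR + sB = 2" | "sR + sB = 1" using hE by auto
    thus ?thesis
    proof cases
      case 1
      hence h: "sR = 0" "sB = 0" "sC = 0" "sA = 0" using rng eid by linarith+
      have "sD = 0"
      proof (rule D0')
        fix y show "qD (a y) (b y) (c y) (d y) = 0" using P1[OF nny[of y]] R0[OF h(1)] C0[OF h(3)] by simp
      qed
      thus ?thesis using h by (simp add: Tab_def)
    next
      case 2
      hence h: "sR = 1" "sB = 1" using rng by linarith+
      have *: "qA (a y) (b y) (c y) (d y) = S y \<and> qC (a y) (b y) (c y) (d y) = S y \<and> qD (a y) (b y) (c y) (d y) = S y" for y
        using P4[OF nny[of y]] R1[OF h(1)] B1[OF h(2)] unfolding S_def by simp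
      have "sA = 1" "sC = 1" "sD = 1" using A1' C1' D1' * by blast+
      thus ?thesis using h by (simp add: Tab_def)
    next
      case 3
      note hE1 = 3
      consider "sA = 1" "sB = 1" | "sA = 0" "sB = 1" | "sA = 1" "sB = 0" | "sA = 0" "sB = 0" using hA hB by auto
      thus ?thesis
      proof cases
        case 1
        hence h: "sR = 0" "sC = 0" using hE1 eid by linarith+
        have "sB = 0"
        proof (rule B0')
          fix y show "qB (a y) (b y) (c y) (d y) = 0" using P1[OF nny[of y]] R0[OF h(1)] C0[OF h(2)] by simp
        qed
        thus ?thesis using 1 by simp
      next
        case 2
        hence h: "sR = 0" "sC = 1" using hE1 eid by linarith+
        have "sD = 1"
        proof (rule D1')
          fix y show "qD (a y) (b y) (c y) (d y) = S y" using P5(1)[OF nny[of y]] B1[OF 2(2)] unfolding S_def by simp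
        qed
        thus ?thesis using 2 h by (simp add: Tab_def)
      next
        case 3
        hence h: "sR = 1" "sC = 0" using hE1 eid by linarith+
        have "sD = 1"
        proof (rule D1')
          fix y show "qD (a y) (b y) (c y) (d y) = S y" using P5(2)[OF nny[of y]] A1[OF 3(1)] unfolding S_def by simp
        qed
        thus ?thesis using 3 h by (simp add: Tab_def)
      next
        case 4
        hence h: "sR = 1" "sC = 1" using hE1 eid by linarith+
        have "sD = 0"
        proof (rule D0')
          fix y show "qD (a y) (b y) (c y) (d y) = 0"
            using P6[OF nny[of y]] A0[OF 4(1)] B0[OF 4(2)] R1[OF h(1)] C1[OF h(2)] unfolding S_def by simp
        qed
        thus ?thesis using 4 h by (simp add: Tab_def)
      qed
    qed
  qed
  show "sR \<in> {0,1} \<Longrightarrow> sC \<in> {0,1} \<Longrightarrow> sD \<in> {0,1} \<Longrightarrow> (sA,sB,sR+sB,sR,sC,sD) \<in> Tab"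
  proof -
    assume hR: "sR \<in> {0,1}" and hC: "sC \<in> {0,1}" and hD: "sD \<in> {0,1}"
    show ?thesis
    proof (cases "sR = 0"; cases "sC = 0"; cases "sD = 0")
      assume h: "sR = 0" "sC = 0" "sD = 0"
      have *: "qA (a y) (b y) (c y) (d y) = 0 \<and> qB (a y) (b y) (c y) (d y) = 0" for y
        using P1[OF nny[of y]] R0[OF h(1)] C0[OF h(2)] by simp
      have "sA = 0" "sB = 0" using A0' B0' * by blast+
      thus ?thesis using h by (simp add: Tab_def)
    next
      assume h: "sR = 0" "sC = 0" "sD \<noteq> 0"
      have "sD = 0"
      proof (rule D0')
        fix y show "qD (a y) (b y) (c y) (d y) = 0" using P1[OF nny[of y]] R0[OF h(1)] C0[OF h(2)] by simp
      qed
      thus ?thesis using h by simp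
    next
      assume h: "sR = 0" "sC \<noteq> 0" "sD = 0"
      have "sC = 0"
      proof (rule C0')
        fix y show "qC (a y) (b y) (c y) (d y) = 0" using P2[OF nny[of y]] R0[OF h(1)] D0[OF h(3)] by simp
      qed
      thus ?thesis using h by simp
    next
      assume h0: "sR = 0" "sC \<noteq> 0" "sD \<noteq> 0"
      hence h: "sR = 0" "sC = 1" "sD = 1" using hC hD by auto
      have *: "qA (a y) (b y) (c y) (d y) = 0 \<and> qB (a y) (b y) (c y) (d y) = S y" for y
        using P8[OF nny[of y]] R0[OF h(1)] C1[OF h(2)] D1[OF h(3)] unfolding S_def by simp
      have "sA = 0" "sB = 1" using A0' B1' * by blast+
      thus ?thesis using h by (simp add: Tab_def)
    next
      assume h0: "sR \<noteq> 0" "sC = 0" "sD = 0"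
      have "sR = 0"
      proof (rule R0')
        fix y show "qR (a y) (b y) (c y) (d y) = 0" using P3[OF nny[of y]] C0[OF h0(2)] D0[OF h0(3)] by simp
      qed
      thus ?thesis using h0 by simp
    next
      assume h0: "sR \<noteq> 0" "sC = 0" "sD \<noteq> 0"
      hence h: "sR = 1" "sC = 0" "sD = 1" using hR hD by auto
      have *: "qA (a y) (b y) (c y) (d y) = S y \<and> qB (a y) (b y) (c y) (d y) = 0" for y
        using P9[OF nny[of y]] R1[OF h(1)] C0[OF h(2)] D1[OF h(3)] unfolding S_def by simp
      have "sA = 1" "sB = 0" using A1' B0' * by blast+
      thus ?thesis using h by (simp add: Tab_def)
    next
      assume h0: "sR \<noteq> 0" "sC \<noteq> 0" "sD = 0"
      hence h: "sR = 1" "sC = 1" "sD = 0" using hR hC by auto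
      have *: "qA (a y) (b y) (c y) (d y) = 0 \<and> qB (a y) (b y) (c y) (d y) = 0" for y
        using P10[OF nny[of y]] R1[OF h(1)] C1[OF h(2)] D0[OF h(3)] unfolding S_def by simp
      have "sA = 0" "sB = 0" using A0' B0' * by blast+
      thus ?thesis using h by (simp add: Tab_def)
    next
      assume h0: "sR \<noteq> 0" "sC \<noteq> 0" "sD \<noteq> 0"
      hence h: "sR = 1" "sC = 1" "sD = 1" using hR hC hD by auto
      have *: "qA (a y) (b y) (c y) (d y) = S y \<and> qB (a y) (b y) (c y) (d y) = S y" for y
        using P7[OF nny[of y]] R1[OF h(1)] C1[OF h(2)] D1[OF h(3)] unfolding S_def by simp
      have "sA = 1" "sB = 1" using A1' B1' * by blast+
      thus ?thesis using h by (simp add: Tab_def)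
    qed
  qed
qed




lemma int01: "(x::real) \<in> \<int> \<Longrightarrow> 0 \<le> x \<Longrightarrow> x \<le> 1 \<Longrightarrow> x \<in> {0,1}"
proof -
  assume "x \<in> \<int>" "0 \<le> x" "x \<le> 1"
  then obtain n where n: "x = of_int n" by (auto elim: Ints_cases)
  hence "0 \<le> n" "n \<le> 1" using \<open>0 \<le> x\<close> \<open>x \<le> 1\<close> by auto
  hence "n = 0 \<or> n = 1" by auto
  thus ?thesis using n by auto
qed

lemma int012: "(x::real) \<in> \<int> \<Longrightarrow> 0 \<le> x \<Longrightarrow> x \<le> 2 \<Longrightarrow> x \<in> {0,1,2}"
proof -
  assume "x \<in> \<int>" "0 \<le> x" "x \<le> 2"
  then obtain n where n: "x = of_int n" by (auto elim: Ints_cases)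
  hence "0 \<le> n" "n \<le> 2" using \<open>0 \<le> x\<close> \<open>x \<le> 2\<close> by auto
  hence "n = 0 \<or> n = 1 \<or> n = 2" by auto
  thus ?thesis using n by auto
qed

lemma Ints_sub_from: "(k::real) \<in> \<int> \<Longrightarrow> k - x \<in> \<int> \<Longrightarrow> x \<in> \<int>"
  using Ints_diff[of k "k - x"] by simp

definition TabIJ :: "((real\<times>real\<times>real)\<times>(real\<times>real\<times>real)) set" where
  "TabIJ = {((1,1,2),(1,1,1)), ((0,0,0),(0,0,0)), ((1,0,1),(1,0,0)), ((0,1,1),(0,1,0)), ((1,1,1),(0,0,1))}"

lemma key2:
  fixes W :: "bool \<Rightarrow> bool \<Rightarrow> 'y::finite \<Rightarrow> real"
  assumes mac: "is_binary_mac W"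
    and h: "triple_in \<int> (I_triple W) \<or> triple_in {0,1} (J_triple W)"
  shows "(I_triple W, J_triple W) \<in> TabIJ"
proof -
  define a where "a y = W True True y / 4" for y
  define b where "b y = W True False y / 4" for y
  define c where "c y = W False True y / 4" for y
  define d where "d y = W False False y / 4" for y
  have nn: "\<And>y. a y \<ge> 0" "\<And>y. b y \<ge> 0" "\<And>y. c y \<ge> 0" "\<And>y. d y \<ge> 0"
    using mac by (auto simp: is_binary_mac_def a_def b_def c_def d_def)
  have tot: "(\<Sum>y\<in>UNIV. a y + b y + c y + d y) = 1"
    using mac by (simp add: is_binary_mac_def a_def b_def c_def d_def sum.distrib sum_divide_distrib[symmetric])
  define sA where "sA \<equiv> \<Sum>y\<in>UNIV. qA (a y) (b y) (c y) (d y)"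
  define sB where "sB \<equiv> \<Sum>y\<in>UNIV. qB (a y) (b y) (c y) (d y)"
  define sR where "sR \<equiv> \<Sum>y\<in>UNIV. qR (a y) (b y) (c y) (d y)"
  define sC where "sC \<equiv> \<Sum>y\<in>UNIV. qC (a y) (b y) (c y) (d y)"
  define sD where "sD \<equiv> \<Sum>y\<in>UNIV. qD (a y) (b y) (c y) (d y)"
  note cl = classify_abs[OF nn tot, folded sA_def sB_def sR_def sC_def sD_def]
  have IW: "I_triple W = (1 - sA, 1 - sB, 2 - (sR + sB))"
    unfolding I_triple_def I1_formula[OF mac] I2_formula[OF mac] I3_formula[OF mac]
    by (simp add: sA_def sB_def sR_def qA_def qB_def qR_def a_def b_def c_def d_def sum.distrib add.assoc)
  have JW: "J_triple W = (1 - sR, 1 - sC, 1 - sD)"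
    unfolding J_triple_def J1_formula[OF mac] J2_formula[OF mac] J3_formula[OF mac]
    by (simp add: sR_def sC_def sD_def qR_def qC_def qD_def a_def b_def c_def d_def)
  have "(sA,sB,sR+sB,sR,sC,sD) \<in> Tab"
    using h
  proof
    assume "triple_in \<int> (I_triple W)"
    hence i: "1 - sA \<in> \<int>" "1 - sB \<in> \<int>" "2 - (sR + sB) \<in> \<int>" unfolding IW triple_in_def by auto
    have "sA \<in> {0,1}" using int01[OF Ints_sub_from[OF _ i(1)]] cl(1) by simp
    moreover have "sB \<in> {0,1}" using int01[OF Ints_sub_from[OF _ i(2)]] cl(1) by simp
    moreover have "sR + sB \<in> {0,1,2}" using int012[OF Ints_sub_from[OF _ i(3)]] cl(1) by simp
    ultimately show ?thesis using cl(2) by blast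
  next
    assume "triple_in {0,1} (J_triple W)"
    hence "1 - sR \<in> {0,1}" "1 - sC \<in> {0,1}" "1 - sD \<in> {0,1}" unfolding JW triple_in_def by auto
    hence "sR \<in> {0,1}" "sC \<in> {0,1}" "sD \<in> {0,1}" by auto
    thus ?thesis using cl(3) by blast
  qed
  thus ?thesis unfolding IW JW Tab_def TabIJ_def by auto
qed

theorem mainTheorem4:
  fixes W :: "bool \<Rightarrow> bool \<Rightarrow> 'y::finite \<Rightarrow> real"
    and W' :: "bool \<Rightarrow> bool \<Rightarrow> 'y2::finite \<Rightarrow> real"
  assumes "is_binary_mac W" and "is_binary_mac W'"
  shows "(triple_in \<int> (I_triple W) \<longrightarrow> triple_in {0, 1} (J_triple W))
       \<and> (triple_in \<int> (I_triple W) \<and> I_triple W' = I_triple W \<longrightarrow> J_triple W' = J_triple W)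
       \<and> (triple_in {0, 1} (J_triple W) \<longrightarrow> triple_in \<int> (I_triple W))
       \<and> (triple_in {0, 1} (J_triple W) \<and> J_triple W' = J_triple W \<longrightarrow> I_triple W' = I_triple W)"
proof (intro conjI impI)
  assume "triple_in \<int> (I_triple W)"
  hence "(I_triple W, J_triple W) \<in> TabIJ" using key2[OF assms(1)] by blast
  thus "triple_in {0, 1} (J_triple W)" unfolding TabIJ_def triple_in_def by auto
next
  assume h: "triple_in \<int> (I_triple W) \<and> I_triple W' = I_triple W"
  hence t1: "(I_triple W, J_triple W) \<in> TabIJ" using key2[OF assms(1)] by blast
  have t2: "(I_triple W', J_triple W') \<in> TabIJ" using key2[OF assms(2)] h by auto
  show "J_triple W' = J_triple W" using t1 t2 h unfolding TabIJ_def by auto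
next
  assume "triple_in {0, 1} (J_triple W)"
  hence "(I_triple W, J_triple W) \<in> TabIJ" using key2[OF assms(1)] by blast
  thus "triple_in \<int> (I_triple W)" unfolding TabIJ_def triple_in_def by auto
next
  assume h: "triple_in {0, 1} (J_triple W) \<and> J_triple W' = J_triple W"
  hence t1: "(I_triple W, J_triple W) \<in> TabIJ" using key2[OF assms(1)] by blast
  have t2: "(I_triple W', J_triple W') \<in> TabIJ" using key2[OF assms(2)] h by auto
  show "I_triple W' = I_triple W" using t1 t2 h unfolding TabIJ_def by auto
qed


end
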